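(* Let $D\subset(0,\infty)\times\mathbb{R}$ be a nonempty open convex set of points $(v,s)$, and let $u\in C^2(D)$ with $u_s(v,s)>0$ for all $(v,s)\in D$. Define $e(v,s,\mathbf v)=u(v,s)+\tfrac12|\mathbf v|^2$ for $(v,s)\in D$, $\mathbf v\in\mathbb{R}^3$, and let $D_s=\{(v,e(v,s,\mathbf v),\mathbf v):(v,s)\in D,\ \mathbf v\in\mathbb{R}^3\}$. Let $s(v,\varepsilon,\mathbf v)$ for $(v,\varepsilon,\mathbf v)\in D_s$ be the unique value with $(v,s(v,\varepsilon,\mathbf v))\in D$ and $e(v,s(v,\varepsilon,\mathbf v),\mathbf v)=\varepsilon$. Let $\Omega=\{(\rho,\bar M,\bar E)\in(0,\infty)\times\mathbb{R}^3\times\mathbb{R}:(1/\rho,\bar E/\rho,\bar M/\rho)\in D_s\}$ and define the entropy density $$\bar S(\rho,\bar M,\bar E)=\rho\, s\!\left(\tfrac1\rho,\tfrac{\bar E}{\rho},\tfrac{\bar M}{\rho}\right),\qquad(\rho,\bar M,\bar E)\in\Omega.$$ Then: (i) the Hessian of $u$ with respect to $(v,s)$ is positive definite at every point of $D$ if and only if the $5\times5$ Hessian of $\bar S$ with respect to $(\rho,\bar M,\bar E)$ is negative definite at every point of $\Omega$; (ii) if $D_s$ is convex, then $u$ is strictly convex on $D$ if and only if $\bar S$ is strictly concave on $\Omega$ (and $u$ is convex on $D$ iff $\bar S$ is concave on $\Omega$).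
   Context: $u(v,s)$ is a specific internal energy in specific volume $v$ and specific entropy $s$; $u_s=\theta>0$ is the temperature. $(\rho,\bar M,\bar E)$ are the conserved variables of the Euler equations: mass density, momentum density and total energy density. Strict concavity means $-\bar S$ is strictly convex. *)

theory Defs
  imports "HOL-Analysis.Analysis"
begin

definition frechet_D :: "('a::real_normed_vector \<Rightarrow> real) \<Rightarrow> 'a \<Rightarrow> ('a \<Rightarrow>\<^sub>L real)" where
  "frechet_D f x = (THE L. (f has_derivative blinfun_apply L) (at x))"

definition hess :: "('a::real_normed_vector \<Rightarrow> real) \<Rightarrow> 'a \<Rightarrow> ('a \<Rightarrow>\<^sub>L ('a \<Rightarrow>\<^sub>L real))" where
  "hess f x = (THE L. ((\<lambda>y. frechet_D f y) has_derivative blinfun_apply L) (at x))"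

definition C2_on :: "'a::real_normed_vector set \<Rightarrow> ('a \<Rightarrow> real) \<Rightarrow> bool" where
  "C2_on S f \<longleftrightarrow>
     (\<forall>x\<in>S. (f has_derivative blinfun_apply (frechet_D f x)) (at x)) \<and>
     (\<forall>x\<in>S. ((\<lambda>y. frechet_D f y) has_derivative blinfun_apply (hess f x)) (at x)) \<and>
     continuous_on S (hess f)"

definition hess_pos_def :: "('a::real_normed_vector \<Rightarrow> real) \<Rightarrow> 'a \<Rightarrow> bool" where
  "hess_pos_def f x \<longleftrightarrow> (\<forall>h. h \<noteq> 0 \<longrightarrow> blinfun_apply (blinfun_apply (hess f x) h) h > 0)"

definition hess_neg_def :: "('a::real_normed_vector \<Rightarrow> real) \<Rightarrow> 'a \<Rightarrow> bool" where
  "hess_neg_def f x \<longleftrightarrow> (\<forall>h. h \<noteq> 0 \<longrightarrow> blinfun_apply (blinfun_apply (hess f x) h) h < 0)"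

definition strict_convex_on :: "'a::real_vector set \<Rightarrow> ('a \<Rightarrow> real) \<Rightarrow> bool" where
  "strict_convex_on S f \<longleftrightarrow> convex S \<and>
    (\<forall>x\<in>S. \<forall>y\<in>S. \<forall>t. x \<noteq> y \<and> 0 < t \<and> t < 1 \<longrightarrow>
        f ((1 - t) *\<^sub>R x + t *\<^sub>R y) < (1 - t) * f x + t * f y)"

definition strict_concave_on :: "'a::real_vector set \<Rightarrow> ('a \<Rightarrow> real) \<Rightarrow> bool" where
  "strict_concave_on S f \<longleftrightarrow> strict_convex_on S (\<lambda>x. - f x)"

definition energy :: "(real \<times> real \<Rightarrow> real) \<Rightarrow> real \<Rightarrow> real \<Rightarrow> real^3 \<Rightarrow> real" where
  "energy u v s w = u (v, s) + norm w ^ 2 / 2"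

definition Ds :: "(real \<times> real) set \<Rightarrow> (real \<times> real \<Rightarrow> real) \<Rightarrow> (real \<times> real \<times> (real^3)) set" where
  "Ds D u = {(v, energy u v s w, w) | v s w. (v, s) \<in> D}"

definition sfun :: "(real \<times> real) set \<Rightarrow> (real \<times> real \<Rightarrow> real) \<Rightarrow> real \<Rightarrow> real \<Rightarrow> real^3 \<Rightarrow> real" where
  "sfun D u v eps w = (THE s. (v, s) \<in> D \<and> energy u v s w = eps)"

definition Omega :: "(real \<times> real) set \<Rightarrow> (real \<times> real \<Rightarrow> real) \<Rightarrow> (real \<times> (real^3) \<times> real) set" where
  "Omega D u = {(rho, M, E) | rho M E. rho > 0 \<and> (1 / rho, E / rho, (1 / rho) *\<^sub>R M) \<in> Ds D u}"

definition Sbar :: "(real \<times> real) set \<Rightarrow> (real \<times> real \<Rightarrow> real) \<Rightarrow> real \<times> (real^3) \<times> real \<Rightarrow> real" where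
  "Sbar D u = (\<lambda>(rho, M, E). rho * sfun D u (1 / rho) (E / rho) ((1 / rho) *\<^sub>R M))"

end

theory Submission
  imports Defs
begin
definition twice :: "('a::real_normed_vector \<Rightarrow> 'b::real_normed_vector) \<Rightarrow> ('a \<Rightarrow> 'a \<Rightarrow>\<^sub>L 'b) \<Rightarrow> ('a \<Rightarrow> 'a \<Rightarrow>\<^sub>L 'b) \<Rightarrow> 'a \<Rightarrow> bool" where
  "twice f Df H x \<longleftrightarrow> (\<forall>\<^sub>F y in nhds x. (f has_derivative blinfun_apply (Df y)) (at y)) \<and> (Df has_derivative H) (at x)"

lemma twice_der: "twice f Df H x \<Longrightarrow> (f has_derivative blinfun_apply (Df x)) (at x)"
  unfolding twice_def using eventually_nhds_x_imp_x by blast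

lemma twice_linear:
  assumes "bounded_linear f"
  shows "twice f (\<lambda>_. Blinfun f) (\<lambda>_. 0) x"
  unfolding twice_def
  using assms by (simp add: bounded_linear_Blinfun_apply bounded_linear_imp_has_derivative)

lemma twice_add:
  assumes "twice f Df Hf x" "twice g Dg Hg x"
  shows "twice (\<lambda>y. f y + g y) (\<lambda>y. Df y + Dg y) (\<lambda>k. Hf k + Hg k) x"
  using assms unfolding twice_def
  by (auto intro!: has_derivative_add simp: plus_blinfun.rep_eq elim: eventually_elim2)

lemma twice_bilinear:
  assumes bb: "bounded_bilinear pr" and f: "twice f Df Hf x" and g: "twice g Dg Hg x"
  shows "twice (\<lambda>y. pr (f y) (g y))
     (\<lambda>y. (bounded_bilinear.prod_left pr (g y) o\<^sub>L Df y) + (bounded_bilinear.prod_right pr (f y) o\<^sub>L Dg y))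
     (\<lambda>k. ((bounded_bilinear.prod_left pr (g x) o\<^sub>L Hf k) + (bounded_bilinear.prod_left pr (blinfun_apply (Dg x) k) o\<^sub>L Df x))
        + ((bounded_bilinear.prod_right pr (f x) o\<^sub>L Hg k) + (bounded_bilinear.prod_right pr (blinfun_apply (Df x) k) o\<^sub>L Dg x))) x"
proof -
  interpret bounded_bilinear pr by fact
  have fd: "(f has_derivative blinfun_apply (Df x)) (at x)" and gd: "(g has_derivative blinfun_apply (Dg x)) (at x)"
    using f g twice_der by blast+
  have e: "\<forall>\<^sub>F y in nhds x. ((\<lambda>y. pr (f y) (g y)) has_derivative blinfun_apply ((prod_left (g y) o\<^sub>L Df y) + (prod_right (f y) o\<^sub>L Dg y))) (at y)"
    using conjunct1[OF f[unfolded twice_def]] conjunct1[OF g[unfolded twice_def]]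
  proof eventually_elim
    case (elim y)
    show ?case
      by (rule has_derivative_eq_rhs, rule FDERIV[OF elim(1) elim(2)])
         (simp add: fun_eq_iff plus_blinfun.rep_eq add.commute)
  qed
  have d1: "((\<lambda>y. prod_left (g y)) has_derivative (\<lambda>k. prod_left (blinfun_apply (Dg x) k))) (at x)"
    by (rule bounded_linear.has_derivative[OF bounded_linear_prod_left gd])
  have d2: "((\<lambda>y. prod_right (f y)) has_derivative (\<lambda>k. prod_right (blinfun_apply (Df x) k))) (at x)"
    by (rule bounded_linear.has_derivative[OF bounded_linear_prod_right fd])
  have Df: "(Df has_derivative Hf) (at x)" and Dg: "(Dg has_derivative Hg) (at x)" using f g unfolding twice_def by auto
  have "((\<lambda>y. (prod_left (g y) o\<^sub>L Df y) + (prod_right (f y) o\<^sub>L Dg y)) has_derivative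
     (\<lambda>k. ((prod_left (g x) o\<^sub>L Hf k) + (prod_left (blinfun_apply (Dg x) k) o\<^sub>L Df x))
        + ((prod_right (f x) o\<^sub>L Hg k) + (prod_right (blinfun_apply (Df x) k) o\<^sub>L Dg x)))) (at x)"
    by (intro has_derivative_add bounded_bilinear.FDERIV[OF bounded_bilinear_blinfun_compose] d1 d2 Df Dg)
  with e show ?thesis unfolding twice_def by simp
qed

lemma twice_compose:
  assumes g: "twice g Dg Hg x" and f: "twice f Df Hf (g x)"
  shows "twice (\<lambda>y. f (g y)) (\<lambda>y. Df (g y) o\<^sub>L Dg y) (\<lambda>k. (Hf (blinfun_apply (Dg x) k) o\<^sub>L Dg x) + (Df (g x) o\<^sub>L Hg k)) x"
proof -
  have gd: "(g has_derivative blinfun_apply (Dg x)) (at x)" using g twice_der by blast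
  then have "isCont g x" by (rule has_derivative_continuous)
  then have lim: "filterlim g (nhds (g x)) (nhds x)"
    by (simp add: isCont_def tendsto_at_iff_tendsto_nhds)
  have ef: "\<forall>\<^sub>F y in nhds x. (f has_derivative blinfun_apply (Df (g y))) (at (g y))"
    using f lim unfolding twice_def filterlim_iff by blast
  have e: "\<forall>\<^sub>F y in nhds x. ((\<lambda>y. f (g y)) has_derivative blinfun_apply (Df (g y) o\<^sub>L Dg y)) (at y)"
    using ef conjunct1[OF g[unfolded twice_def]]
  proof eventually_elim
    case (elim y)
    show ?case
      by (rule has_derivative_eq_rhs, rule has_derivative_compose[OF elim(2) elim(1)]) (simp add: fun_eq_iff)
  qed
  have Df: "(Df has_derivative Hf) (at (g x))" and Dg: "(Dg has_derivative Hg) (at x)" using f g unfolding twice_def by auto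
  have d1: "((\<lambda>y. Df (g y)) has_derivative (\<lambda>k. Hf (blinfun_apply (Dg x) k))) (at x)"
    by (rule has_derivative_compose[OF gd Df])
  have "((\<lambda>y. Df (g y) o\<^sub>L Dg y) has_derivative (\<lambda>k. (Hf (blinfun_apply (Dg x) k) o\<^sub>L Dg x) + (Df (g x) o\<^sub>L Hg k))) (at x)"
    by (rule has_derivative_eq_rhs, rule bounded_bilinear.FDERIV[OF bounded_bilinear_blinfun_compose d1 Dg])
       (simp add: fun_eq_iff add.commute)
  with e show ?thesis unfolding twice_def by simp
qed

lemma frechet_D_eq:
  assumes "(f has_derivative blinfun_apply L) (at y)"
  shows "frechet_D f y = L"
  unfolding frechet_D_def
proof (rule the_equality)
  show "(f has_derivative blinfun_apply L) (at y)" by fact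
  fix L' assume "(f has_derivative blinfun_apply L') (at y)"
  from has_derivative_unique[OF this assms] show "L' = L" by (simp add: blinfun_apply_inject)
qed

lemma twice_frechet:
  assumes "twice f Df H x"
  shows "twice f (frechet_D f) H x"
proof -
  have e: "\<forall>\<^sub>F y in nhds x. (f has_derivative blinfun_apply (Df y)) (at y)" and d: "(Df has_derivative H) (at x)"
    using assms unfolding twice_def by auto
  from e have e2: "\<forall>\<^sub>F y in nhds x. frechet_D f y = Df y"
    by eventually_elim (rule frechet_D_eq)
  have e3: "\<forall>\<^sub>F y in nhds x. (f has_derivative blinfun_apply (frechet_D f y)) (at y)"
    using e e2 by eventually_elim simp
  have "((frechet_D f) has_derivative H) (at x)"
  proof (rule has_derivative_transform_eventually[OF d])
    show "\<forall>\<^sub>F x' in at x within UNIV. Df x' = frechet_D f x'"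
      using e2 unfolding eventually_at_filter by eventually_elim simp
    show "Df x = frechet_D f x" using eventually_nhds_x_imp_x[OF e2] by simp
  qed simp
  with e3 show ?thesis unfolding twice_def by simp
qed

lemma twice_hess:
  assumes "twice f (frechet_D f) H x"
  shows "blinfun_apply (hess f x) = H"
proof -
  have d: "((frechet_D f) has_derivative H) (at x)" using assms unfolding twice_def by auto
  then have bl: "bounded_linear H" by (rule has_derivative_bounded_linear)
  have "hess f x = Blinfun H"
    unfolding hess_def
  proof (rule the_equality)
    show "(frechet_D f has_derivative blinfun_apply (Blinfun H)) (at x)"
      using d bl by (simp add: bounded_linear_Blinfun_apply)
    fix L' assume "(frechet_D f has_derivative blinfun_apply L') (at x)"
    from has_derivative_unique[OF this d] bl show "L' = Blinfun H"
      by (metis blinfun_apply_inverse)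
  qed
  then show ?thesis using bl by (simp add: bounded_linear_Blinfun_apply)
qed

lemma twice_C2:
  assumes "C2_on S f" "open S" "p \<in> S"
  shows "twice f (frechet_D f) (blinfun_apply (hess f p)) p"
  using assms unfolding C2_on_def twice_def
  by (auto simp: eventually_nhds)

lemma twice_inverse:
  assumes "(x::real) \<noteq> 0"
  shows "twice inverse (\<lambda>y. (- (inverse y * inverse y)) *\<^sub>R id_blinfun) (\<lambda>k. (2 * k * inverse x ^ 3) *\<^sub>R id_blinfun) x"
  unfolding twice_def
proof
  have "\<forall>\<^sub>F y in nhds x. y \<in> - {0}"
    by (rule eventually_nhds_in_open) (use assms in auto)
  then show "\<forall>\<^sub>F y in nhds x. (inverse has_derivative blinfun_apply ((- (inverse y * inverse y)) *\<^sub>R id_blinfun)) (at y)"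
  proof eventually_elim
    case (elim y)
    then have "y \<noteq> 0" by simp
    show ?case by (rule has_derivative_eq_rhs[OF has_derivative_inverse'[OF \<open>y \<noteq> 0\<close>]]) (auto simp: fun_eq_iff uminus_blinfun.rep_eq scaleR_blinfun.rep_eq)
  qed
  show "((\<lambda>y. (- (inverse y * inverse y)) *\<^sub>R id_blinfun) has_derivative (\<lambda>k. (2 * k * inverse x ^ 3) *\<^sub>R id_blinfun)) (at x)"
  proof -
    have a: "((\<lambda>y. - (inverse y * inverse y)) has_derivative (\<lambda>k. 2 * k * inverse x ^ 3)) (at x)"
      by (rule has_derivative_eq_rhs[OF has_derivative_minus[OF has_derivative_mult[OF has_derivative_inverse'[OF assms] has_derivative_inverse'[OF assms]]]])
        (simp add: fun_eq_iff power3_eq_cube algebra_simps)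
    show ?thesis
      by (rule has_derivative_eq_rhs[OF has_derivative_scaleR[OF a has_derivative_const]]) (simp add: fun_eq_iff)
  qed
qed

lemma twice_pair:
  fixes a b :: "'a::real_normed_vector \<Rightarrow> real"
  assumes a: "twice a Da Ha x" and b: "twice b Db Hb x"
  shows "twice (\<lambda>y. (a y, b y))
   (\<lambda>y. (Blinfun (\<lambda>r. (r, 0)) o\<^sub>L Da y) + (Blinfun (\<lambda>r. (0, r)) o\<^sub>L Db y))
   (\<lambda>k. ((0 o\<^sub>L Da x) + (Blinfun (\<lambda>r. (r, 0)) o\<^sub>L Ha k)) + ((0 o\<^sub>L Db x) + (Blinfun (\<lambda>r. (0, r)) o\<^sub>L Hb k))) x"
proof -
  have l1: "bounded_linear (\<lambda>r::real. (r, 0::real))" and l2: "bounded_linear (\<lambda>r::real. (0::real, r))"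
    by (auto intro!: bounded_linear_Pair bounded_linear_ident bounded_linear_zero)
  from twice_add[OF twice_compose[OF a twice_linear[OF l1]] twice_compose[OF b twice_linear[OF l2]]]
  show ?thesis by simp
qed

definition e1 :: "real \<times> real" where "e1 = (1, 0)"
definition e2 :: "real \<times> real" where "e2 = (0, 1)"

lemma blin_pair: "blinfun_apply (L :: (real \<times> real) \<Rightarrow>\<^sub>L 'b::real_normed_vector) (a, b) = a *\<^sub>R L e1 + b *\<^sub>R L e2"
proof -
  have "(a, b) = a *\<^sub>R e1 + b *\<^sub>R e2" by (simp add: e1_def e2_def)
  then show ?thesis by (simp add: blinfun.add_right blinfun.scaleR_right)
qed

definition gam :: "real \<times> (real^3) \<times> real \<Rightarrow> real \<times> real" where
  "gam x = (inverse (fst x), snd (snd x) * inverse (fst x))"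

definition Eb :: "(real \<times> real \<Rightarrow> real) \<Rightarrow> real \<times> (real^3) \<times> real \<Rightarrow> real" where
  "Eb u x = fst x * u (gam x) + inner (fst (snd x)) (fst (snd x)) * inverse (2 * fst x)"

lemma Eb_twice:
  assumes C2: "C2_on D u" and oD: "open D" and x: "fst x > 0" "gam x \<in> D"
  shows "\<exists>H. twice (Eb u) (frechet_D (Eb u)) H x \<and>
     blinfun_apply (frechet_D (Eb u) x) (0, 0, 1) = blinfun_apply (frechet_D u (gam x)) (0, 1) \<and>
     (\<forall>h. blinfun_apply (H h) h =
        fst x * blinfun_apply (blinfun_apply (hess u (gam x))
            (- fst h / fst x ^ 2, snd (snd h) / fst x - snd (snd x) * fst h / fst x ^ 2))
            (- fst h / fst x ^ 2, snd (snd h) / fst x - snd (snd x) * fst h / fst x ^ 2)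
        + inner (fst (snd h) - (fst h / fst x) *\<^sub>R fst (snd x)) (fst (snd h) - (fst h / fst x) *\<^sub>R fst (snd x)) / fst x)"
proof -
  have lf: "bounded_linear (fst :: real \<times> (real^3) \<times> real \<Rightarrow> real)" by (rule bounded_linear_fst)
  have lS: "bounded_linear (\<lambda>y::real \<times> (real^3) \<times> real. snd (snd y))"
    by (intro bounded_linear_compose[OF bounded_linear_snd bounded_linear_snd])
  have lM: "bounded_linear (\<lambda>y::real \<times> (real^3) \<times> real. fst (snd y))"
    by (intro bounded_linear_compose[OF bounded_linear_fst bounded_linear_snd])
  have l2: "bounded_linear (\<lambda>y::real \<times> (real^3) \<times> real. 2 * fst y)"
    by (intro bounded_linear_compose[OF bounded_linear_mult_right lf])
  have fx0: "fst x \<noteq> 0" "2 * fst x \<noteq> 0" using x by auto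
  note tinv = twice_compose[OF twice_linear[OF lf] twice_inverse[OF fx0(1)]]
  note tinv2 = twice_compose[OF twice_linear[OF l2] twice_inverse[OF fx0(2)]]
  note tq = twice_bilinear[OF bounded_bilinear_mult twice_linear[OF lS] tinv]
  note tg = twice_pair[OF tinv tq]
  note tu = twice_C2[OF C2 oD x(2), unfolded gam_def]
  note tug = twice_compose[OF tg tu]
  note t1 = twice_bilinear[OF bounded_bilinear_mult twice_linear[OF lf] tug]
  note t2 = twice_bilinear[OF bounded_bilinear_mult twice_bilinear[OF bounded_bilinear_inner twice_linear[OF lM] twice_linear[OF lM]] tinv2]
  note t = twice_add[OF t1 t2, folded gam_def, folded Eb_def]
  show ?thesis
    apply (rule exI, rule conjI, rule twice_frechet[OF t])
    apply (rule conjI)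
    apply (subst frechet_D_eq[OF twice_der[OF t]])
    using fx0(1) apply (simp add: blin_pair bounded_linear_Blinfun_apply lf lS lM l2 plus_blinfun.rep_eq scaleR_blinfun.rep_eq
         bounded_linear_Pair bounded_linear_zero inner_add inner_diff
         bounded_bilinear.prod_left.rep_eq[OF bounded_bilinear_mult] bounded_bilinear.prod_right.rep_eq[OF bounded_bilinear_mult]
         bounded_bilinear.prod_left.rep_eq[OF bounded_bilinear_inner] bounded_bilinear.prod_right.rep_eq[OF bounded_bilinear_inner]
         uminus_blinfun.rep_eq minus_blinfun.rep_eq)
    apply (intro allI)
    apply (simp add: blin_pair bounded_linear_Blinfun_apply lf lS lM l2 plus_blinfun.rep_eq scaleR_blinfun.rep_eq
         bounded_linear_Pair bounded_linear_zero inner_add inner_diff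
         bounded_bilinear.prod_left.rep_eq[OF bounded_bilinear_mult] bounded_bilinear.prod_right.rep_eq[OF bounded_bilinear_mult]
         bounded_bilinear.prod_left.rep_eq[OF bounded_bilinear_inner] bounded_bilinear.prod_right.rep_eq[OF bounded_bilinear_inner]
         uminus_blinfun.rep_eq minus_blinfun.rep_eq)
    using fx0(1) apply (simp add: field_simps power2_eq_square power3_eq_cube inner_commute)
    done
qed

locale thermo =
  fixes D :: "(real \<times> real) set" and u :: "real \<times> real \<Rightarrow> real"
  assumes oD: "open D" and cD: "convex D" and posD: "D \<subseteq> {p. fst p > 0}"
    and C2: "C2_on D u" and us: "\<forall>p\<in>D. blinfun_apply (frechet_D u p) (0, 1) > 0"
begin

definition "Omp = {x. fst x > 0 \<and> gam x \<in> D}"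
definition "Phi x = (fst x, fst (snd x), Eb u x)"
definition "Psi q = (fst q, fst (snd q), Sbar D u q)"

lemma u_mono:
  assumes "(v, s1) \<in> D" "(v, s2) \<in> D" "s1 < s2"
  shows "u (v, s1) < u (v, s2)"
proof -
  have der: "\<exists>y. ((\<lambda>s. u (v, s)) has_real_derivative y) (at s) \<and> y > 0" if "s1 \<le> s" "s \<le> s2" for s
  proof -
    define t where "t = (s - s1) / (s2 - s1)"
    have t: "t * (s2 - s1) = s - s1" using assms(3) by (simp add: t_def)
    have "(v, s) = (1 - t) *\<^sub>R (v, s1) + t *\<^sub>R (v, s2)"
      using t by (simp add: algebra_simps)
    also have "\<dots> \<in> D"
      using that assms by (intro convexD_alt[OF cD]) (auto simp: t_def field_simps)
    finally have sD: "(v, s) \<in> D" .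
    have du: "(u has_derivative blinfun_apply (frechet_D u (v, s))) (at (v, s))"
      using C2 sD unfolding C2_on_def by auto
    have "((\<lambda>s. u (v, s)) has_derivative (\<lambda>h. blinfun_apply (frechet_D u (v, s)) (0, h))) (at s)"
    proof -
      have pd: "((\<lambda>s. (v, s)) has_derivative (\<lambda>h. (0, h))) (at s)"
        by (rule has_derivative_Pair[OF has_derivative_const has_derivative_ident])
      show ?thesis using has_derivative_compose[of "\<lambda>s. (v, s)" "\<lambda>h. (0, h)" s UNIV u, OF pd] du by simp
    qed
    moreover have "(\<lambda>h. blinfun_apply (frechet_D u (v, s)) (0, h)) = (*) (blinfun_apply (frechet_D u (v, s)) (0, 1))"
    proof
      fix h :: real
      have "(0::real, h) = h *\<^sub>R (0, 1)" by simp
      then show "blinfun_apply (frechet_D u (v, s)) (0, h) = blinfun_apply (frechet_D u (v, s)) (0, 1) * h"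
        by (metis blinfun.scaleR_right real_scaleR_def mult.commute)
    qed
    ultimately have "((\<lambda>s. u (v, s)) has_real_derivative (blinfun_apply (frechet_D u (v, s)) (0, 1))) (at s)"
      by (simp add: has_field_derivative_def)
    then show ?thesis using us sD by blast
  qed
  show ?thesis by (rule DERIV_pos_imp_increasing[OF assms(3) der])
qed

lemma u_inj:
  assumes "(v, s1) \<in> D" "(v, s2) \<in> D" "u (v, s1) = u (v, s2)"
  shows "s1 = s2"
  using u_mono[OF assms(1,2)] u_mono[OF assms(2,1)] assms(3)
  by (metis less_irrefl linorder_neqE_linordered_idom)

lemma sfun_eq:
  assumes "(v, s) \<in> D" "energy u v s w = eps"
  shows "sfun D u v eps w = s"
  unfolding sfun_def
proof (rule the_equality)
  show "(v, s) \<in> D \<and> energy u v s w = eps" using assms by simp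
  fix s' assume "(v, s') \<in> D \<and> energy u v s' w = eps"
  then show "s' = s" using u_inj[of v s' s] assms by (auto simp: energy_def)
qed

lemma Phi_in:
  assumes "x \<in> Omp"
  shows "Phi x \<in> Omega D u" "Sbar D u (Phi x) = snd (snd x)" "Psi (Phi x) = x"
proof -
  obtain r M S where x: "x = (r, M, S)" by (cases x) auto
  have r: "r > 0" and g: "(inverse r, S * inverse r) \<in> D" using assms by (auto simp: Omp_def gam_def x)
  have nM: "norm M * norm M = M \<bullet> M" by (metis power2_norm_eq_inner power2_eq_square)
  have en: "energy u (1 / r) (S * inverse r) ((1 / r) *\<^sub>R M) = Eb u x / r"
    using r by (simp add: energy_def Eb_def gam_def x field_simps power2_eq_square nM)
  have "(1 / r, Eb u x / r, (1 / r) *\<^sub>R M) \<in> Ds D u"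
    unfolding Ds_def using g en[symmetric] by (auto simp: divide_inverse intro!: exI[of _ "S * inverse r"])
  then show "Phi x \<in> Omega D u" using r by (auto simp: Omega_def Phi_def x)
  have "sfun D u (1 / r) (Eb u x / r) ((1 / r) *\<^sub>R M) = S * inverse r"
    by (rule sfun_eq) (use g en in \<open>auto simp: divide_inverse\<close>)
  then show "Sbar D u (Phi x) = snd (snd x)" using r by (simp add: Sbar_def Phi_def x)
  then show "Psi (Phi x) = x" by (simp add: Psi_def Phi_def x)
qed

lemma Psi_in:
  assumes "q \<in> Omega D u"
  shows "Psi q \<in> Omp" "Phi (Psi q) = q"
proof -
  obtain r M E where q: "q = (r, M, E)" by (cases q) auto
  obtain s where r: "r > 0" and sD: "(1 / r, s) \<in> D" and en: "E / r = energy u (1 / r) s ((1 / r) *\<^sub>R M)"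
    using assms by (auto simp: Omega_def Ds_def q)
  have "sfun D u (1 / r) (E / r) ((1 / r) *\<^sub>R M) = s" by (rule sfun_eq) (use sD en in auto)
  then have Sb: "Sbar D u (r, M, E) = r * s" by (simp add: Sbar_def)
  have nM: "norm M * norm M = M \<bullet> M" by (metis power2_norm_eq_inner power2_eq_square)
  have rs: "r * s * inverse r = s" using r by simp
  show "Psi q \<in> Omp" using r sD by (simp add: Omp_def Psi_def Sb gam_def q divide_inverse rs)
  have "Eb u (r, M, r * s) = E"
    using r en by (simp add: Eb_def gam_def energy_def field_simps power2_eq_square nM)
  then show "Phi (Psi q) = q" by (simp add: Phi_def Psi_def Sb q)
qed

lemma Omega_img: "Omega D u = Phi ` Omp"
  using Phi_in Psi_in by (metis image_eqI subsetI subset_antisym image_subsetI)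

lemma Eb_props:
  assumes "x \<in> Omp"
  shows "\<exists>H. twice (Eb u) (frechet_D (Eb u)) H x \<and>
     blinfun_apply (frechet_D (Eb u) x) (0, 0, 1) = blinfun_apply (frechet_D u (gam x)) (0, 1) \<and>
     (\<forall>h. blinfun_apply (H h) h =
        fst x * blinfun_apply (blinfun_apply (hess u (gam x))
            (- fst h / fst x ^ 2, snd (snd h) / fst x - snd (snd x) * fst h / fst x ^ 2))
            (- fst h / fst x ^ 2, snd (snd h) / fst x - snd (snd x) * fst h / fst x ^ 2)
        + inner (fst (snd h) - (fst h / fst x) *\<^sub>R fst (snd x)) (fst (snd h) - (fst h / fst x) *\<^sub>R fst (snd x)) / fst x)"
  by (rule Eb_twice[OF C2 oD]) (use assms in \<open>auto simp: Omp_def\<close>)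

lemma open_Omp: "open Omp"
proof -
  have "continuous_on {x. fst x > 0} gam"
    unfolding gam_def by (intro continuous_intros) auto
  from continuous_open_preimage[OF this _ oD] have "open ({x. fst x > 0} \<inter> gam -` D)"
    by (simp add: open_Collect_less continuous_on_fst continuous_on_const)
  moreover have "Omp = {x. fst x > 0} \<inter> gam -` D" by (auto simp: Omp_def)
  ultimately show ?thesis by simp
qed

lemma Eb_diff: "x \<in> Omp \<Longrightarrow> (Eb u has_derivative blinfun_apply (frechet_D (Eb u) x)) (at x)"
  using Eb_props twice_der by blast

lemma open_Omega: "open (Omega D u)"
proof -
  have "continuous_on Omp Phi"
  proof (rule continuous_at_imp_continuous_on, intro ballI)
    fix x assume "x \<in> Omp"
    then have "isCont (Eb u) x" using Eb_diff has_derivative_continuous by blast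
    then show "isCont Phi x" unfolding Phi_def by (intro continuous_intros)
  qed
  moreover have "inj_on Phi Omp" by (metis Phi_in(3) inj_on_inverseI)
  ultimately show ?thesis unfolding Omega_img by (rule invariance_of_domain[OF _ open_Omp])
qed

end

definition "e3 = ((0::real), (0::real^3), (1::real))"
definition "Pb = Blinfun (\<lambda>h::real \<times> (real^3) \<times> real. (fst h, fst (snd h), (0::real)))"
definition "Bs = Blinfun (\<lambda>h::real \<times> (real^3) \<times> real. snd (snd h))"

lemma lin_Pb: "bounded_linear (\<lambda>h::real \<times> (real^3) \<times> real. (fst h, fst (snd h), (0::real)))"
  by (intro bounded_linear_Pair bounded_linear_fst bounded_linear_zero bounded_linear_compose[OF bounded_linear_fst bounded_linear_snd])
lemma lin_Bs: "bounded_linear (\<lambda>h::real \<times> (real^3) \<times> real. snd (snd h))"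
  by (intro bounded_linear_compose[OF bounded_linear_snd bounded_linear_snd])

lemma Pb_apply[simp]: "blinfun_apply Pb h = (fst h, fst (snd h), 0)"
  unfolding Pb_def using lin_Pb by (simp add: bounded_linear_Blinfun_apply)
lemma Bs_apply[simp]: "blinfun_apply Bs h = snd (snd h)"
  unfolding Bs_def using lin_Bs by (simp add: bounded_linear_Blinfun_apply)

lemma split3: "blinfun_apply (L :: (real \<times> (real^3) \<times> real) \<Rightarrow>\<^sub>L 'b::real_normed_vector) h
   = L (fst h, fst (snd h), 0) + snd (snd h) *\<^sub>R L e3"
proof -
  have "h = (fst h, fst (snd h), 0) + snd (snd h) *\<^sub>R e3" by (simp add: e3_def)
  then show ?thesis by (metis blinfun.add_right blinfun.scaleR_right)
qed

context thermo
begin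

lemma cont_Phi: "continuous_on Omp Phi"
proof (rule continuous_at_imp_continuous_on, intro ballI)
  fix x assume "x \<in> Omp"
  then have "isCont (Eb u) x" using Eb_diff has_derivative_continuous by blast
  then show "isCont Phi x" unfolding Phi_def by (intro continuous_intros)
qed

definition "DS y = inverse (blinfun_apply (frechet_D (Eb u) (Psi y)) e3) *\<^sub>R (Bs - (frechet_D (Eb u) (Psi y) o\<^sub>L Pb))"

lemma e3_pos: "x \<in> Omp \<Longrightarrow> blinfun_apply (frechet_D (Eb u) x) e3 > 0"
  using Eb_props[of x] us unfolding e3_def Omp_def by auto

lemma Psi_der:
  assumes y: "y \<in> Omega D u"
  shows "(Psi has_derivative (\<lambda>h. (fst h, fst (snd h), blinfun_apply (DS y) h))) (at y)"
    "(Sbar D u has_derivative blinfun_apply (DS y)) (at y)"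
proof -
  define x where "x = Psi y"
  have x: "x \<in> Omp" "Phi x = y" using Psi_in[OF y] by (auto simp: x_def)
  define A where "A = frechet_D (Eb u) x"
  have a: "blinfun_apply A e3 > 0" using e3_pos[OF x(1)] by (simp add: A_def)
  have PhiL: "Phi = (\<lambda>x. (fst x, fst (snd x), Eb u x))" by (simp add: fun_eq_iff Phi_def)
  have derf: "(Phi has_derivative (\<lambda>h. (fst h, fst (snd h), blinfun_apply A h))) (at x)"
    unfolding PhiL A_def
    by (intro has_derivative_Pair has_derivative_fst[OF has_derivative_ident]
        has_derivative_fst[OF has_derivative_snd[OF has_derivative_ident]] Eb_diff x)
  have DSy: "blinfun_apply (DS y) h = inverse (blinfun_apply A e3) * (snd (snd h) - blinfun_apply A (fst h, fst (snd h), 0))" for h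
    by (simp add: DS_def A_def x_def minus_blinfun.rep_eq scaleR_blinfun.rep_eq)
  have id: "(\<lambda>h. (fst h, fst (snd h), blinfun_apply A h)) \<circ> (\<lambda>h. (fst h, fst (snd h), blinfun_apply (DS y) h)) = id"
  proof
    fix h :: "real \<times> (real^3) \<times> real"
    have "blinfun_apply A (fst h, fst (snd h), blinfun_apply (DS y) h) = snd (snd h)"
      using a by (subst split3) (simp add: DSy field_simps)
    then show "((\<lambda>h. (fst h, fst (snd h), blinfun_apply A h)) \<circ> (\<lambda>h. (fst h, fst (snd h), blinfun_apply (DS y) h))) h = id h"
      by simp
  qed
  from has_derivative_inverse_strong[OF open_Omp x(1) cont_Phi _ derf id] x(2) Phi_in(3)
  show pd: "(Psi has_derivative (\<lambda>h. (fst h, fst (snd h), blinfun_apply (DS y) h))) (at y)" by auto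
  have "Sbar D u = (\<lambda>y. snd (snd (Psi y)))" by (simp add: fun_eq_iff Psi_def)
  then show "(Sbar D u has_derivative blinfun_apply (DS y)) (at y)"
    using has_derivative_snd[OF has_derivative_snd[OF pd]] by simp
qed

lemma Sbar_hess:
  assumes q: "q \<in> Omega D u" and HE: "twice (Eb u) (frechet_D (Eb u)) HE (Psi q)"
  shows "blinfun_apply (blinfun_apply (hess (Sbar D u) q) h) h =
     - blinfun_apply (HE (fst h, fst (snd h), blinfun_apply (DS q) h)) (fst h, fst (snd h), blinfun_apply (DS q) h)
       / blinfun_apply (frechet_D (Eb u) (Psi q)) e3"
proof -
  define g' where "g' = (\<lambda>h. (fst h, fst (snd h), blinfun_apply (DS q) h))"
  define A where "A = frechet_D (Eb u) (Psi q)"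
  define a where "a = blinfun_apply A e3"
  have a: "a > 0" using e3_pos Psi_in(1)[OF q] by (simp add: a_def A_def)
  have pd: "(Psi has_derivative g') (at q)" using Psi_der(1)[OF q] by (simp add: g'_def)
  have dH: "(frechet_D (Eb u) has_derivative HE) (at (Psi q))" using HE unfolding twice_def by auto
  have dA: "((\<lambda>y. frechet_D (Eb u) (Psi y)) has_derivative (\<lambda>k. HE (g' k))) (at q)"
    by (rule has_derivative_compose[OF pd dH])
  have dAe: "((\<lambda>y. blinfun_apply (frechet_D (Eb u) (Psi y)) e3) has_derivative (\<lambda>k. blinfun_apply (HE (g' k)) e3)) (at q)"
    by (rule bounded_linear.has_derivative[OF blinfun.bounded_linear_left dA])
  have dc: "((\<lambda>y. inverse (blinfun_apply (frechet_D (Eb u) (Psi y)) e3)) has_derivative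
      (\<lambda>k. - (inverse a * blinfun_apply (HE (g' k)) e3 * inverse a))) (at q)"
    using Deriv.has_derivative_inverse[OF _ dAe] a by (simp add: a_def A_def)
  have dB: "((\<lambda>y. Bs - (frechet_D (Eb u) (Psi y) o\<^sub>L Pb)) has_derivative (\<lambda>k. - (HE (g' k) o\<^sub>L Pb))) (at q)"
    by (rule has_derivative_eq_rhs, rule has_derivative_diff[OF has_derivative_const
        bounded_bilinear.FDERIV[OF bounded_bilinear_blinfun_compose dA has_derivative_const]]) simp
  define HS where "HS = (\<lambda>k. inverse a *\<^sub>R (- (HE (g' k) o\<^sub>L Pb)) + (- (inverse a * blinfun_apply (HE (g' k)) e3 * inverse a)) *\<^sub>R (Bs - (A o\<^sub>L Pb)))"
  have dDS: "(DS has_derivative HS) (at q)"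
    unfolding DS_def[abs_def] HS_def
    by (rule has_derivative_eq_rhs, rule has_derivative_scaleR[OF dc dB]) (simp add: a_def A_def)
  have ev: "\<forall>\<^sub>F y in nhds q. (Sbar D u has_derivative blinfun_apply (DS y)) (at y)"
    using eventually_nhds_in_open[OF open_Omega q] by eventually_elim (rule Psi_der(2))
  have tw: "twice (Sbar D u) DS HS q" unfolding twice_def using ev dDS by simp
  have hS: "blinfun_apply (hess (Sbar D u) q) = HS" by (rule twice_hess[OF twice_frechet[OF tw]])
  define L where "L = HE (g' h)"
  have DSq: "blinfun_apply (DS q) h = inverse a * (snd (snd h) - blinfun_apply A (fst h, fst (snd h), 0))"
    by (simp add: DS_def A_def a_def minus_blinfun.rep_eq scaleR_blinfun.rep_eq)
  have "blinfun_apply (HS h) h = - (inverse a * blinfun_apply L (fst h, fst (snd h), 0))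
     - inverse a * blinfun_apply L e3 * inverse a * (snd (snd h) - blinfun_apply A (fst h, fst (snd h), 0))"
    by (simp add: HS_def L_def plus_blinfun.rep_eq minus_blinfun.rep_eq scaleR_blinfun.rep_eq uminus_blinfun.rep_eq algebra_simps)
  also have "\<dots> = - blinfun_apply L (g' h) / a"
    using a by (subst (2) split3) (simp add: g'_def DSq field_simps)
  finally show ?thesis by (simp add: hS L_def g'_def a_def A_def)
qed

end

context thermo
begin

lemma Sbar_neg_iff:
  assumes q: "q \<in> Omega D u" and HE: "twice (Eb u) (frechet_D (Eb u)) HE (Psi q)"
  shows "hess_neg_def (Sbar D u) q \<longleftrightarrow> (\<forall>k. k \<noteq> 0 \<longrightarrow> blinfun_apply (HE k) k > 0)"
proof -
  define A where "A = frechet_D (Eb u) (Psi q)"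
  define a where "a = blinfun_apply A e3"
  have a: "a > 0" using e3_pos Psi_in(1)[OF q] by (simp add: a_def A_def)
  define g' where "g' = (\<lambda>h. (fst h, fst (snd h), blinfun_apply (DS q) h))"
  have DSq: "blinfun_apply (DS q) h = inverse a * (snd (snd h) - blinfun_apply A (fst h, fst (snd h), 0))" for h
    by (simp add: DS_def A_def a_def minus_blinfun.rep_eq scaleR_blinfun.rep_eq)
  have hs: "blinfun_apply (blinfun_apply (hess (Sbar D u) q) h) h = - blinfun_apply (HE (g' h)) (g' h) / a" for h
    using Sbar_hess[OF q HE] by (simp add: g'_def a_def A_def)
  have inj: "g' h \<noteq> 0" if "h \<noteq> 0" for h
  proof
    assume "g' h = 0"
    then have "fst h = 0" "fst (snd h) = 0" "blinfun_apply (DS q) h = 0" by (auto simp: g'_def zero_prod_def)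
    moreover have "blinfun_apply A (0, 0, 0) = 0" by (metis blinfun.zero_right zero_prod_def)
    ultimately have "snd (snd h) = 0" using a by (simp add: DSq)
    with \<open>fst h = 0\<close> \<open>fst (snd h) = 0\<close> that show False by (simp add: prod_eq_iff)
  qed
  have surj: "g' (fst k, fst (snd k), blinfun_apply A k) = k" for k
  proof -
    have "blinfun_apply A k = blinfun_apply A (fst k, fst (snd k), 0) + snd (snd k) * a"
      by (subst split3) (simp add: a_def)
    then show ?thesis using a by (simp add: g'_def DSq field_simps)
  qed
  show ?thesis
  proof
    assume neg: "hess_neg_def (Sbar D u) q"
    show "\<forall>k. k \<noteq> 0 \<longrightarrow> blinfun_apply (HE k) k > 0"
    proof (intro allI impI)
      fix k :: "real \<times> (real^3) \<times> real" assume "k \<noteq> 0"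
      define h where "h = (fst k, fst (snd k), blinfun_apply A k)"
      have "h \<noteq> 0"
      proof
        assume "h = 0"
        then have "k = g' 0" using surj[of k] by (simp add: h_def)
        also have "g' 0 = 0" by (simp add: g'_def zero_prod_def[symmetric])
        finally show False using \<open>k \<noteq> 0\<close> by simp
      qed
      then have "blinfun_apply (blinfun_apply (hess (Sbar D u) q) h) h < 0" using neg unfolding hess_neg_def_def by blast
      then have "- blinfun_apply (HE k) k / a < 0" using hs[of h] surj[of k] unfolding h_def by simp
      then show "blinfun_apply (HE k) k > 0" using a by (simp add: zero_less_divide_iff)
    qed
  next
    assume pos: "\<forall>k. k \<noteq> 0 \<longrightarrow> blinfun_apply (HE k) k > 0"
    show "hess_neg_def (Sbar D u) q"
      unfolding hess_neg_def_def
    proof (intro allI impI)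
      fix h :: "real \<times> (real^3) \<times> real" assume "h \<noteq> 0"
      then have "blinfun_apply (HE (g' h)) (g' h) > 0" using pos inj by blast
      then show "blinfun_apply (blinfun_apply (hess (Sbar D u) q) h) h < 0" using a hs[of h] by (simp add: divide_less_0_iff)
    qed
  qed
qed

lemma Eb_pos_iff:
  assumes x: "x \<in> Omp" and H: "\<forall>h. blinfun_apply (H h) h =
        fst x * blinfun_apply (blinfun_apply (hess u (gam x))
            (- fst h / fst x ^ 2, snd (snd h) / fst x - snd (snd x) * fst h / fst x ^ 2))
            (- fst h / fst x ^ 2, snd (snd h) / fst x - snd (snd x) * fst h / fst x ^ 2)
        + inner (fst (snd h) - (fst h / fst x) *\<^sub>R fst (snd x)) (fst (snd h) - (fst h / fst x) *\<^sub>R fst (snd x)) / fst x"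
  shows "hess_pos_def u (gam x) \<longleftrightarrow> (\<forall>k. k \<noteq> 0 \<longrightarrow> blinfun_apply (H k) k > 0)"
proof -
  define r where "r = fst x"
  define M where "M = fst (snd x)"
  define S where "S = snd (snd x)"
  have r: "r > 0" using x by (simp add: Omp_def r_def)
  define w where "w = (\<lambda>h::real \<times> (real^3) \<times> real. (- fst h / r ^ 2, snd (snd h) / r - S * fst h / r ^ 2))"
  define Hu where "Hu = hess u (gam x)"
  have Hk: "blinfun_apply (H h) h = r * blinfun_apply (blinfun_apply Hu (w h)) (w h)
     + inner (fst (snd h) - (fst h / r) *\<^sub>R M) (fst (snd h) - (fst h / r) *\<^sub>R M) / r" for h
    using spec[OF H, of h] by (simp add: r_def M_def S_def w_def Hu_def)
  show ?thesis
  proof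
    assume hp: "hess_pos_def u (gam x)"
    show "\<forall>k. k \<noteq> 0 \<longrightarrow> blinfun_apply (H k) k > 0"
    proof (intro allI impI)
      fix k :: "real \<times> (real^3) \<times> real" assume k: "k \<noteq> 0"
      have i0: "inner (fst (snd k) - (fst k / r) *\<^sub>R M) (fst (snd k) - (fst k / r) *\<^sub>R M) / r \<ge> 0"
        using r by simp
      show "blinfun_apply (H k) k > 0"
      proof (cases "w k = 0")
        case False
        then have "blinfun_apply (blinfun_apply Hu (w k)) (w k) > 0" using hp unfolding hess_pos_def_def Hu_def by blast
        then show ?thesis using Hk[of k] r i0 by (smt (verit) mult_pos_pos)
      next
        case True
        then have f0: "fst k = 0" using r by (simp add: w_def zero_prod_def)
        with True have s0: "snd (snd k) = 0" using r by (simp add: w_def zero_prod_def)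
        have m0: "fst (snd k) \<noteq> 0" using k f0 s0 by (auto simp: prod_eq_iff)
        have "inner (fst (snd k)) (fst (snd k)) / r > 0" using m0 r by simp
        then show ?thesis using Hk[of k] True f0 by simp
      qed
    qed
  next
    assume hp: "\<forall>k. k \<noteq> 0 \<longrightarrow> blinfun_apply (H k) k > 0"
    show "hess_pos_def u (gam x)"
      unfolding hess_pos_def_def
    proof (intro allI impI)
      fix v :: "real \<times> real" assume v: "v \<noteq> 0"
      define kr where "kr = - fst v * r ^ 2"
      define k where "k = (kr, (kr / r) *\<^sub>R M, r * snd v + S * kr / r)"
      have wk: "w k = v" using r by (simp add: w_def k_def kr_def field_simps power2_eq_square prod_eq_iff)
      have "k \<noteq> 0"
      proof
        assume "k = 0"
        then have "kr = 0" "r * snd v + S * kr / r = 0" by (auto simp: k_def zero_prod_def)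
        then have "fst v = 0" "snd v = 0" using r by (auto simp: kr_def)
        with v show False by (simp add: prod_eq_iff)
      qed
      then have "blinfun_apply (H k) k > 0" using hp by blast
      then have "r * blinfun_apply (blinfun_apply Hu v) v > 0" using Hk[of k] wk by (simp add: k_def)
      then show "blinfun_apply (blinfun_apply (hess u (gam x)) v) v > 0" using r by (simp add: Hu_def zero_less_mult_iff)
    qed
  qed
qed

lemma part1: "(\<forall>p\<in>D. hess_pos_def u p) \<longleftrightarrow> (\<forall>q\<in>Omega D u. hess_neg_def (Sbar D u) q)"
proof
  assume hp: "\<forall>p\<in>D. hess_pos_def u p"
  show "\<forall>q\<in>Omega D u. hess_neg_def (Sbar D u) q"
  proof
    fix q assume q: "q \<in> Omega D u"
    have x: "Psi q \<in> Omp" by (rule Psi_in(1)[OF q])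
    obtain H where tw: "twice (Eb u) (frechet_D (Eb u)) H (Psi q)" and Hf: "\<forall>h. blinfun_apply (H h) h =
        fst (Psi q) * blinfun_apply (blinfun_apply (hess u (gam (Psi q)))
            (- fst h / fst (Psi q) ^ 2, snd (snd h) / fst (Psi q) - snd (snd (Psi q)) * fst h / fst (Psi q) ^ 2))
            (- fst h / fst (Psi q) ^ 2, snd (snd h) / fst (Psi q) - snd (snd (Psi q)) * fst h / fst (Psi q) ^ 2)
        + inner (fst (snd h) - (fst h / fst (Psi q)) *\<^sub>R fst (snd (Psi q))) (fst (snd h) - (fst h / fst (Psi q)) *\<^sub>R fst (snd (Psi q))) / fst (Psi q)"
      using Eb_props[OF x] by blast
    have "gam (Psi q) \<in> D" using x by (simp add: Omp_def)
    then show "hess_neg_def (Sbar D u) q"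
      using hp Sbar_neg_iff[OF q tw] Eb_pos_iff[OF x Hf] by blast
  qed
next
  assume hn: "\<forall>q\<in>Omega D u. hess_neg_def (Sbar D u) q"
  show "\<forall>p\<in>D. hess_pos_def u p"
  proof
    fix p assume p: "p \<in> D"
    obtain v s where pv: "p = (v, s)" by (cases p)
    have v: "v > 0" using p posD pv by auto
    define x where "x = (inverse v, (0::real^3), s * inverse v)"
    have gx: "gam x = p" using v by (simp add: gam_def x_def pv)
    have x: "x \<in> Omp" using v p gx by (simp add: Omp_def x_def)
    have q: "Phi x \<in> Omega D u" and Px: "Psi (Phi x) = x" using Phi_in[OF x] by auto
    obtain H where tw: "twice (Eb u) (frechet_D (Eb u)) H x" and Hf: "\<forall>h. blinfun_apply (H h) h =
        fst x * blinfun_apply (blinfun_apply (hess u (gam x))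
            (- fst h / fst x ^ 2, snd (snd h) / fst x - snd (snd x) * fst h / fst x ^ 2))
            (- fst h / fst x ^ 2, snd (snd h) / fst x - snd (snd x) * fst h / fst x ^ 2)
        + inner (fst (snd h) - (fst h / fst x) *\<^sub>R fst (snd x)) (fst (snd h) - (fst h / fst x) *\<^sub>R fst (snd x)) / fst x"
      using Eb_props[OF x] by blast
    have "hess_neg_def (Sbar D u) (Phi x)" using hn q by blast
    then have "\<forall>k. k \<noteq> 0 \<longrightarrow> blinfun_apply (H k) k > 0" using Sbar_neg_iff[OF q] tw Px by simp
    then show "hess_pos_def u p" using Eb_pos_iff[OF x Hf] gx by simp
  qed
qed

end

lemma persp:
  fixes r1 r2 t :: real
  assumes r1: "r1 > 0" and r2: "r2 > 0" and t: "0 \<le> t" "t \<le> 1"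
  defines "r \<equiv> (1 - t) * r1 + t * r2"
  defines "m \<equiv> t * r2 / r"
  shows "r > 0" "0 \<le> m" "m \<le> 1" "r * (1 - m) = (1 - t) * r1" "r * m = t * r2"
    "\<And>a1 a2 :: 'a::real_vector. (1 - m) *\<^sub>R ((1 / r1) *\<^sub>R a1) + m *\<^sub>R ((1 / r2) *\<^sub>R a2) = (1 / r) *\<^sub>R ((1 - t) *\<^sub>R a1 + t *\<^sub>R a2)"
    "0 < t \<Longrightarrow> t < 1 \<Longrightarrow> 0 < m \<and> m < 1"
proof -
  have rpos: "(1 - t) * r1 + t * r2 > 0"
  proof (cases "t = 0")
    case True then show ?thesis using r1 by simp
  next
    case False
    then have "t * r2 > 0" using t r2 by simp
    moreover have "(1 - t) * r1 \<ge> 0" using t r1 by simp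
    ultimately show ?thesis by linarith
  qed
  show rp: "r > 0" unfolding r_def by (rule rpos)
  show "0 \<le> m" unfolding m_def using rp r2 t by simp
  show "m \<le> 1" unfolding m_def using rp r1 r2 t by (simp add: divide_le_eq r_def)
  show rm1: "r * (1 - m) = (1 - t) * r1" unfolding m_def using rp by (simp add: field_simps r_def)
  show rm: "r * m = t * r2" unfolding m_def using rp by simp
  show "0 < t \<Longrightarrow> t < 1 \<Longrightarrow> 0 < m \<and> m < 1" unfolding m_def using r1 r2 rp
    by (simp add: divide_less_eq r_def)
  fix a1 a2 :: 'a
  have "(1 - m) / r1 = (1 - t) / r" using rm1 rp r1 by (simp add: field_simps)
  moreover have "m / r2 = t / r" using rm rp r2 by (simp add: field_simps)
  ultimately show "(1 - m) *\<^sub>R ((1 / r1) *\<^sub>R a1) + m *\<^sub>R ((1 / r2) *\<^sub>R a2) = (1 / r) *\<^sub>R ((1 - t) *\<^sub>R a1 + t *\<^sub>R a2)"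
    by (simp add: scaleR_add_right)
qed

definition lessb :: "bool \<Rightarrow> real \<Rightarrow> real \<Rightarrow> bool" where
  "lessb b x y \<longleftrightarrow> (if b then x < y else x \<le> y)"

definition cvx :: "bool \<Rightarrow> 'a::real_vector set \<Rightarrow> ('a \<Rightarrow> real) \<Rightarrow> bool" where
  "cvx b S f \<longleftrightarrow> convex S \<and> (\<forall>x\<in>S. \<forall>y\<in>S. \<forall>t. 0 < t \<and> t < 1 \<and> (b \<longrightarrow> x \<noteq> y) \<longrightarrow>
      lessb b (f ((1 - t) *\<^sub>R x + t *\<^sub>R y)) ((1 - t) * f x + t * f y))"

lemma cvx_True: "cvx True S f = strict_convex_on S f"
  by (auto simp: cvx_def lessb_def strict_convex_on_def)

lemma cvx_False: "cvx False S f = convex_on S f"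
proof
  assume "cvx False S f"
  then show "convex_on S f" by (intro convex_onI) (auto simp: cvx_def lessb_def)
next
  assume c: "convex_on S f"
  then have "convex S" by (simp add: convex_on_def)
  with convex_onD[OF c] show "cvx False S f" by (auto simp: cvx_def lessb_def)
qed

lemma lessb_weak: "lessb b x y \<Longrightarrow> x \<le> y" by (auto simp: lessb_def split: if_splits)
lemma lessb_trans1: "lessb b x y \<Longrightarrow> y \<le> z \<Longrightarrow> lessb b x z" by (auto simp: lessb_def split: if_splits)
lemma lessb_trans2: "x \<le> y \<Longrightarrow> lessb b y z \<Longrightarrow> lessb b x z" by (auto simp: lessb_def split: if_splits)
lemma lessb_add: "lessb b x y \<Longrightarrow> x' \<le> y' \<Longrightarrow> lessb b (x + x') (y + y')" by (auto simp: lessb_def split: if_splits)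
lemma lessb_add2: "x \<le> y \<Longrightarrow> lessb b x' y' \<Longrightarrow> lessb b (x + x') (y + y')" by (auto simp: lessb_def split: if_splits)
lemma lessb_mult: "c > 0 \<Longrightarrow> lessb b x y \<Longrightarrow> lessb b (c * x) (c * y)" by (auto simp: lessb_def split: if_splits)
lemma lessb_mult_iff: "c > 0 \<Longrightarrow> lessb b (c * x) (c * y) \<longleftrightarrow> lessb b x y" by (auto simp: lessb_def split: if_splits)
lemma lessb_False: "x \<le> y \<Longrightarrow> lessb False x y" by (simp add: lessb_def)
lemma lessb_True: "x < y \<Longrightarrow> lessb b x y" by (auto simp: lessb_def)

lemma kin_real:
  fixes P Q R r1 r2 t r :: real
  assumes r1: "r1 > 0" and r2: "r2 > 0" and r: "r = (1 - t) * r1 + t * r2" "r > 0"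
  shows "(1 - t) * P / r1 + t * R / r2 - ((1 - t) * (1 - t) * P + 2 * (1 - t) * t * Q + t * t * R) / r
     = (1 - t) * t * r1 * r2 / r * (P / (r1 * r1) - 2 * Q / (r1 * r2) + R / (r2 * r2))"
proof -
  have "r \<noteq> 0" "r1 \<noteq> 0" "r2 \<noteq> 0" using r r1 r2 by auto
  then show ?thesis unfolding r(1)[symmetric] by (simp add: field_simps) (simp add: r(1) algebra_simps)
qed

lemma kin_ident:
  fixes M1 M2 :: "'a::real_inner"
  assumes r1: "r1 > 0" and r2: "r2 > 0" and r: "r = (1 - t) * r1 + t * r2" "r > 0"
  shows "(1 - t) * inner M1 M1 / r1 + t * inner M2 M2 / r2 - inner ((1 - t) *\<^sub>R M1 + t *\<^sub>R M2) ((1 - t) *\<^sub>R M1 + t *\<^sub>R M2) / r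
     = (1 - t) * t * r1 * r2 / r * inner ((1 / r1) *\<^sub>R M1 - (1 / r2) *\<^sub>R M2) ((1 / r1) *\<^sub>R M1 - (1 / r2) *\<^sub>R M2)"
proof -
  have e1: "inner ((1 - t) *\<^sub>R M1 + t *\<^sub>R M2) ((1 - t) *\<^sub>R M1 + t *\<^sub>R M2) = (1 - t) * (1 - t) * inner M1 M1 + 2 * (1 - t) * t * inner M1 M2 + t * t * inner M2 M2"
    by (simp add: inner_add inner_commute[of M2 M1] algebra_simps)
  have e2: "inner ((1 / r1) *\<^sub>R M1 - (1 / r2) *\<^sub>R M2) ((1 / r1) *\<^sub>R M1 - (1 / r2) *\<^sub>R M2) = inner M1 M1 / (r1 * r1) - 2 * inner M1 M2 / (r1 * r2) + inner M2 M2 / (r2 * r2)"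
    by (simp add: inner_diff inner_commute[of M2 M1] algebra_simps)
  show ?thesis unfolding e1 e2 by (rule kin_real[OF assms])
qed

lemma lessb_comb: "lessb c1 a b1 \<Longrightarrow> lessb c2 c d \<Longrightarrow> (b \<longrightarrow> c1 \<or> c2) \<Longrightarrow> lessb b (a + c) (b1 + d)"
  by (auto simp: lessb_def split: if_splits)

lemma gam_alt: "gam y = (1 / fst y) *\<^sub>R (1, snd (snd y))"
  by (simp add: gam_def divide_inverse)

lemma gam_comb:
  assumes "fst x1 > 0" "fst x2 > 0" "0 \<le> t" "t \<le> 1"
  shows "gam ((1 - t) *\<^sub>R x1 + t *\<^sub>R x2) = (1 - t * fst x2 / ((1 - t) * fst x1 + t * fst x2)) *\<^sub>R gam x1
      + (t * fst x2 / ((1 - t) * fst x1 + t * fst x2)) *\<^sub>R gam x2"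
proof -
  have "(1 - t) *\<^sub>R (1::real, snd (snd x1)) + t *\<^sub>R (1, snd (snd x2)) = (1, snd (snd ((1 - t) *\<^sub>R x1 + t *\<^sub>R x2)))"
    by (simp add: algebra_simps)
  then show ?thesis
    unfolding gam_alt[of "(1 - t) *\<^sub>R x1 + t *\<^sub>R x2"] gam_alt[of x1] gam_alt[of x2]
    using persp(6)[OF assms, of "(1::real, snd (snd x1))" "(1, snd (snd x2))"] by simp
qed

context thermo
begin

lemma convex_Omp: "convex Omp"
  unfolding convex_alt
proof (intro ballI allI impI)
  fix x1 x2 and t :: real assume x: "x1 \<in> Omp" "x2 \<in> Omp" and t: "0 \<le> t \<and> t \<le> 1"
  have r: "fst x1 > 0" "fst x2 > 0" "gam x1 \<in> D" "gam x2 \<in> D" using x by (auto simp: Omp_def)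
  note P = persp[OF r(1,2), of t]
  show "(1 - t) *\<^sub>R x1 + t *\<^sub>R x2 \<in> Omp"
    unfolding Omp_def using P(1) t gam_comb[OF r(1,2), of t] convexD_alt[OF cD r(3,4) P(2,3)] by auto
qed

lemma convex_Omega:
  assumes cDs: "convex (Ds D u)"
  shows "convex (Omega D u)"
  unfolding convex_alt
proof (intro ballI allI impI)
  fix q1 q2 and t :: real assume q: "q1 \<in> Omega D u" "q2 \<in> Omega D u" and t: "0 \<le> t \<and> t \<le> 1"
  have mem: "q \<in> Omega D u \<longleftrightarrow> fst q > 0 \<and> (1 / fst q) *\<^sub>R (1, snd (snd q), fst (snd q)) \<in> Ds D u" for q
    by (cases q) (auto simp: Omega_def divide_inverse mult.commute)
  have r: "fst q1 > 0" "fst q2 > 0" and d: "(1 / fst q1) *\<^sub>R (1, snd (snd q1), fst (snd q1)) \<in> Ds D u"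
    "(1 / fst q2) *\<^sub>R (1, snd (snd q2), fst (snd q2)) \<in> Ds D u" using q mem by auto
  have t1: "0 \<le> t" "t \<le> 1" using t by auto
  note P = persp[OF r(1,2) t1]
  have e: "(1 - t) *\<^sub>R (1::real, snd (snd q1), fst (snd q1)) + t *\<^sub>R (1, snd (snd q2), fst (snd q2))
     = (1, snd (snd ((1 - t) *\<^sub>R q1 + t *\<^sub>R q2)), fst (snd ((1 - t) *\<^sub>R q1 + t *\<^sub>R q2)))"
    by (simp add: algebra_simps)
  have fq: "fst ((1 - t) *\<^sub>R q1 + t *\<^sub>R q2) = (1 - t) * fst q1 + t * fst q2" by simp
  from convexD_alt[OF cDs d P(2,3)]
  have "(1 / ((1 - t) * fst q1 + t * fst q2)) *\<^sub>R (1, snd (snd ((1 - t) *\<^sub>R q1 + t *\<^sub>R q2)), fst (snd ((1 - t) *\<^sub>R q1 + t *\<^sub>R q2))) \<in> Ds D u"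
    unfolding P(6) e .
  then show "(1 - t) *\<^sub>R q1 + t *\<^sub>R q2 \<in> Omega D u"
    unfolding mem fq using P(1) by simp
qed

lemma Eb_mono:
  assumes "x \<in> Omp" "x' \<in> Omp" "fst x = fst x'" "fst (snd x) = fst (snd x')" "snd (snd x) < snd (snd x')"
  shows "Eb u x < Eb u x'"
proof -
  have r: "fst x > 0" and g: "gam x \<in> D" "gam x' \<in> D" using assms by (auto simp: Omp_def)
  have "u (gam x) < u (gam x')"
    using u_mono[of "inverse (fst x)" "snd (snd x) * inverse (fst x)" "snd (snd x') * inverse (fst x)"] g assms(3,5) r
    by (simp add: gam_def)
  then show ?thesis using r assms(3,4) by (simp add: Eb_def)
qed

lemma Eb_lessb:
  assumes "x \<in> Omp" "x' \<in> Omp" "fst x = fst x'" "fst (snd x) = fst (snd x')"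
  shows "lessb b (Eb u x) (Eb u x') \<longleftrightarrow> lessb b (snd (snd x)) (snd (snd x'))"
proof -
  have eq: "snd (snd x) = snd (snd x') \<Longrightarrow> x = x'" using assms(3,4) by (simp add: prod_eq_iff)
  show ?thesis
    using Eb_mono[OF assms] Eb_mono[OF assms(2,1) assms(3,4)[symmetric]] eq
    unfolding lessb_def by (cases b) (auto, (metis less_le not_less)+)
qed

end

context thermo
begin

lemma A_fwd:
  assumes cu: "cvx b D u"
  shows "cvx b Omp (Eb u)"
  unfolding cvx_def
proof (intro conjI convex_Omp ballI allI impI)
  fix x1 x2 and t :: real assume x: "x1 \<in> Omp" "x2 \<in> Omp" and tb: "0 < t \<and> t < 1 \<and> (b \<longrightarrow> x1 \<noteq> x2)"
  have t: "0 < t" "t < 1" using tb by auto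
  have t1: "0 \<le> t" "t \<le> 1" using tb by auto
  have r: "fst x1 > 0" "fst x2 > 0" and z: "gam x1 \<in> D" "gam x2 \<in> D" using x by (auto simp: Omp_def)
  define r1 where "r1 = fst x1"
  define r2 where "r2 = fst x2"
  define r where "r = (1 - t) * r1 + t * r2"
  define m where "m = t * r2 / r"
  note P = persp[OF r(1,2) t1, folded r1_def r2_def, folded r_def, folded m_def]
  have m01: "0 < m" "m < 1" using P(7)[OF t] by auto
  define x where "x = (1 - t) *\<^sub>R x1 + t *\<^sub>R x2"
  have gx: "gam x = (1 - m) *\<^sub>R gam x1 + m *\<^sub>R gam x2"
    using gam_comb[OF r(1,2) t1] unfolding x_def m_def r_def r1_def r2_def .
  have fx: "fst x = r" by (simp add: x_def r_def r1_def r2_def)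
  define k where "k = (\<lambda>y::real \<times> (real^3) \<times> real. inner (fst (snd y)) (fst (snd y)) * inverse (2 * fst y))"
  have Ebk: "Eb u y = fst y * u (gam y) + k y" for y by (simp add: Eb_def k_def)
  have hu: "lessb (b \<and> gam x1 \<noteq> gam x2) (u (gam x)) ((1 - m) * u (gam x1) + m * u (gam x2))"
  proof (cases "gam x1 = gam x2")
    case True
    then have "gam x = gam x1" using gx by (simp add: scaleR_left_diff_distrib[symmetric])
    then show ?thesis using True by (simp add: lessb_def algebra_simps)
  next
    case False
    then have "lessb b (u ((1 - m) *\<^sub>R gam x1 + m *\<^sub>R gam x2)) ((1 - m) * u (gam x1) + m * u (gam x2))"
      using cu z m01 unfolding cvx_def by blast
    then show ?thesis using False gx by simp
  qed
  have hk: "lessb (b \<and> gam x1 = gam x2) (k x) ((1 - t) * k x1 + t * k x2)"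
  proof -
    define M1 where "M1 = fst (snd x1)"
    define M2 where "M2 = fst (snd x2)"
    have Mx: "fst (snd x) = (1 - t) *\<^sub>R M1 + t *\<^sub>R M2" by (simp add: x_def M1_def M2_def)
    have id: "(1 - t) * inner M1 M1 / r1 + t * inner M2 M2 / r2 - inner ((1 - t) *\<^sub>R M1 + t *\<^sub>R M2) ((1 - t) *\<^sub>R M1 + t *\<^sub>R M2) / r
     = (1 - t) * t * r1 * r2 / r * inner ((1 / r1) *\<^sub>R M1 - (1 / r2) *\<^sub>R M2) ((1 / r1) *\<^sub>R M1 - (1 / r2) *\<^sub>R M2)"
      by (rule kin_ident) (use r P(1) in \<open>auto simp: r1_def r2_def r_def\<close>)
    have c: "(1 - t) * t * r1 * r2 / r > 0" using t r P(1) by (simp add: r1_def r2_def)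
    have kd: "(1 - t) * k x1 + t * k x2 - k x = ((1 - t) * inner M1 M1 / r1 + t * inner M2 M2 / r2 - inner ((1 - t) *\<^sub>R M1 + t *\<^sub>R M2) ((1 - t) *\<^sub>R M1 + t *\<^sub>R M2) / r) / 2"
      unfolding k_def Mx fx using r P(1) by (simp add: M1_def M2_def r1_def r2_def field_simps)
    show ?thesis
    proof (cases "b \<and> gam x1 = gam x2")
      case True
      then have "inverse r1 = inverse r2" "snd (snd x1) * inverse r1 = snd (snd x2) * inverse r2"
        by (auto simp: gam_def r1_def r2_def)
      then have e: "r1 = r2" "snd (snd x1) = snd (snd x2)" using r by (auto simp: r1_def r2_def)
      have "M1 \<noteq> M2" using True tb e by (auto simp: prod_eq_iff M1_def M2_def r1_def r2_def)
      then have "(1 / r1) *\<^sub>R M1 - (1 / r2) *\<^sub>R M2 \<noteq> 0" using e r by (simp add: r1_def)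
      then have "inner ((1 / r1) *\<^sub>R M1 - (1 / r2) *\<^sub>R M2) ((1 / r1) *\<^sub>R M1 - (1 / r2) *\<^sub>R M2) > 0" by simp
      from mult_pos_pos[OF c this]
      have "(1 - t) * k x1 + t * k x2 - k x > 0" unfolding kd id by (rule half_gt_zero)
      then show ?thesis using True by (simp add: lessb_def)
    next
      case False
      have "inner ((1 / r1) *\<^sub>R M1 - (1 / r2) *\<^sub>R M2) ((1 / r1) *\<^sub>R M1 - (1 / r2) *\<^sub>R M2) \<ge> 0" by simp
      from mult_nonneg_nonneg[OF less_imp_le[OF c] this]
      have "(1 - t) * k x1 + t * k x2 - k x \<ge> 0" unfolding kd id by (rule divide_nonneg_pos) simp_all
      then show ?thesis using False by (auto simp: lessb_def)
    qed
  qed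
  have "lessb b (r * u (gam x) + k x) (r * ((1 - m) * u (gam x1) + m * u (gam x2)) + ((1 - t) * k x1 + t * k x2))"
    by (rule lessb_comb[OF lessb_mult[OF P(1) hu] hk]) auto
  moreover have "r * ((1 - m) * u (gam x1) + m * u (gam x2)) + ((1 - t) * k x1 + t * k x2) = (1 - t) * Eb u x1 + t * Eb u x2"
  proof -
    have "r * ((1 - m) * u (gam x1) + m * u (gam x2)) = (r * (1 - m)) * u (gam x1) + (r * m) * u (gam x2)"
      by (simp add: algebra_simps)
    also have "\<dots> = (1 - t) * r1 * u (gam x1) + t * r2 * u (gam x2)" unfolding P(4,5) ..
    finally show ?thesis by (simp add: Ebk algebra_simps r1_def r2_def)
  qed
  ultimately show "lessb b (Eb u ((1 - t) *\<^sub>R x1 + t *\<^sub>R x2)) ((1 - t) * Eb u x1 + t * Eb u x2)"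
    by (simp add: Ebk fx flip: x_def)
qed

end

context thermo
begin

lemma A_bwd:
  assumes ce: "cvx b Omp (Eb u)"
  shows "cvx b D u"
  unfolding cvx_def
proof (intro conjI cD ballI allI impI)
  fix z1 z2 and t :: real assume z: "z1 \<in> D" "z2 \<in> D" and tb: "0 < t \<and> t < 1 \<and> (b \<longrightarrow> z1 \<noteq> z2)"
  have t: "0 < t" "t < 1" using tb by auto
  have t1: "0 \<le> t" "t \<le> 1" using tb by auto
  have v: "fst z1 > 0" "fst z2 > 0" using z posD by auto
  define v1 where "v1 = fst z1"
  define v2 where "v2 = fst z2"
  define r where "r = (1 - t) * v1 + t * v2"
  define m where "m = t * v2 / r"
  note P = persp[OF v(1,2) t1, folded v1_def v2_def, folded r_def, folded m_def]
  have m01: "0 < m" "m < 1" using P(7)[OF t] by auto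
  define X where "X = (\<lambda>z::real \<times> real. (1 / fst z) *\<^sub>R ((1::real), (0::real^3), snd z))"
  have gX: "gam (X z) = z" if "fst z > 0" for z
    using that by (simp add: X_def gam_def prod_eq_iff)
  have XO: "X z \<in> Omp" if "z \<in> D" for z
  proof -
    have "fst z > 0" using that posD by auto
    then show ?thesis using that gX by (simp add: Omp_def X_def)
  qed
  have EX: "Eb u (X z) = (1 / fst z) * u z" if "fst z > 0" for z
    using that gX[OF that] by (simp add: Eb_def X_def)
  define z where "z = (1 - t) *\<^sub>R z1 + t *\<^sub>R z2"
  have fz: "fst z = r" by (simp add: z_def r_def v1_def v2_def)
  have zr: "fst z > 0" using fz P(1) by simp
  have comb: "(1 - m) *\<^sub>R X z1 + m *\<^sub>R X z2 = X z"
  proof -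
    have "(1 - t) *\<^sub>R ((1::real), (0::real^3), snd z1) + t *\<^sub>R (1, 0, snd z2) = (1, 0, snd z)"
      by (simp add: z_def algebra_simps)
    then show ?thesis unfolding X_def using P(6)[of "((1::real), (0::real^3), snd z1)" "(1, 0, snd z2)"]
      by (simp add: fz v1_def v2_def)
  qed
  have ne: "b \<longrightarrow> X z1 \<noteq> X z2" using tb gX v by metis
  have "lessb b (Eb u ((1 - m) *\<^sub>R X z1 + m *\<^sub>R X z2)) ((1 - m) * Eb u (X z1) + m * Eb u (X z2))"
    using ce XO[OF z(1)] XO[OF z(2)] m01 ne unfolding cvx_def by blast
  then have "lessb b ((1 / r) * u z) ((1 - m) * ((1 / v1) * u z1) + m * ((1 / v2) * u z2))"
    unfolding comb using EX[OF zr] EX[OF v(1)] EX[OF v(2)] by (simp add: fz v1_def v2_def)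
  moreover have "(1 - m) * ((1 / v1) * u z1) + m * ((1 / v2) * u z2) = (1 / r) * ((1 - t) * u z1 + t * u z2)"
  proof -
    have e1: "(1 - m) / v1 = (1 - t) / r" using P(4) P(1) v by (simp add: field_simps v1_def)
    have e2: "m / v2 = t / r" using P(5) P(1) v by (simp add: field_simps v2_def)
    have "(1 - m) * ((1 / v1) * u z1) + m * ((1 / v2) * u z2) = ((1 - m) / v1) * u z1 + (m / v2) * u z2" by simp
    also have "\<dots> = ((1 - t) / r) * u z1 + (t / r) * u z2" unfolding e1 e2 ..
    also have "\<dots> = (1 / r) * ((1 - t) * u z1 + t * u z2)" using P(1) by (simp add: field_simps)
    finally show ?thesis .
  qed
  ultimately have "lessb b ((1 / r) * u z) ((1 / r) * ((1 - t) * u z1 + t * u z2))" by simp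
  then show "lessb b (u ((1 - t) *\<^sub>R z1 + t *\<^sub>R z2)) ((1 - t) * u z1 + t * u z2)"
    using lessb_mult_iff[of "1 / r"] P(1) by (simp add: z_def)
qed

lemma B_prep:
  assumes x: "x1 \<in> Omp" "x2 \<in> Omp" and t: "0 \<le> t" "t \<le> 1"
    and q: "(1 - t) *\<^sub>R Phi x1 + t *\<^sub>R Phi x2 \<in> Omega D u"
  shows "(1 - t) *\<^sub>R x1 + t *\<^sub>R x2 \<in> Omp" "Psi ((1 - t) *\<^sub>R Phi x1 + t *\<^sub>R Phi x2) \<in> Omp"
    "fst ((1 - t) *\<^sub>R x1 + t *\<^sub>R x2) = fst (Psi ((1 - t) *\<^sub>R Phi x1 + t *\<^sub>R Phi x2))"
    "fst (snd ((1 - t) *\<^sub>R x1 + t *\<^sub>R x2)) = fst (snd (Psi ((1 - t) *\<^sub>R Phi x1 + t *\<^sub>R Phi x2)))"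
    "Eb u (Psi ((1 - t) *\<^sub>R Phi x1 + t *\<^sub>R Phi x2)) = (1 - t) * Eb u x1 + t * Eb u x2"
    "snd (snd (Psi ((1 - t) *\<^sub>R Phi x1 + t *\<^sub>R Phi x2))) = Sbar D u ((1 - t) *\<^sub>R Phi x1 + t *\<^sub>R Phi x2)"
proof -
  show "(1 - t) *\<^sub>R x1 + t *\<^sub>R x2 \<in> Omp" using convex_Omp x t by (simp add: convex_alt)
  show "Psi ((1 - t) *\<^sub>R Phi x1 + t *\<^sub>R Phi x2) \<in> Omp" by (rule Psi_in(1)[OF q])
  have pp: "Phi (Psi ((1 - t) *\<^sub>R Phi x1 + t *\<^sub>R Phi x2)) = (1 - t) *\<^sub>R Phi x1 + t *\<^sub>R Phi x2" by (rule Psi_in(2)[OF q])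
  show "fst ((1 - t) *\<^sub>R x1 + t *\<^sub>R x2) = fst (Psi ((1 - t) *\<^sub>R Phi x1 + t *\<^sub>R Phi x2))"
    by (simp add: Psi_def Phi_def)
  show "fst (snd ((1 - t) *\<^sub>R x1 + t *\<^sub>R x2)) = fst (snd (Psi ((1 - t) *\<^sub>R Phi x1 + t *\<^sub>R Phi x2)))"
    by (simp add: Psi_def Phi_def)
  show "Eb u (Psi ((1 - t) *\<^sub>R Phi x1 + t *\<^sub>R Phi x2)) = (1 - t) * Eb u x1 + t * Eb u x2"
    using arg_cong[OF pp, of "\<lambda>p. snd (snd p)"] by (simp add: Phi_def)
  show "snd (snd (Psi ((1 - t) *\<^sub>R Phi x1 + t *\<^sub>R Phi x2))) = Sbar D u ((1 - t) *\<^sub>R Phi x1 + t *\<^sub>R Phi x2)"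
    by (simp add: Psi_def)
qed

lemma B_fwd:
  assumes cO: "convex (Omega D u)" and ce: "cvx b Omp (Eb u)"
  shows "cvx b (Omega D u) (\<lambda>q. - Sbar D u q)"
  unfolding cvx_def
proof (intro conjI cO ballI allI impI)
  fix q1 q2 and t :: real assume q: "q1 \<in> Omega D u" "q2 \<in> Omega D u" and tb: "0 < t \<and> t < 1 \<and> (b \<longrightarrow> q1 \<noteq> q2)"
  have t1: "0 \<le> t" "t \<le> 1" using tb by auto
  define x1 where "x1 = Psi q1"
  define x2 where "x2 = Psi q2"
  have x: "x1 \<in> Omp" "x2 \<in> Omp" using Psi_in q by (auto simp: x1_def x2_def)
  have qx: "q1 = Phi x1" "q2 = Phi x2" using Psi_in q by (auto simp: x1_def x2_def)
  have qin: "(1 - t) *\<^sub>R Phi x1 + t *\<^sub>R Phi x2 \<in> Omega D u"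
    using cO q t1 unfolding convex_alt qx by blast
  note S = B_prep[OF x t1 qin]
  have ne: "b \<longrightarrow> x1 \<noteq> x2" using tb qx by auto
  have "lessb b (Eb u ((1 - t) *\<^sub>R x1 + t *\<^sub>R x2)) ((1 - t) * Eb u x1 + t * Eb u x2)"
    using ce x tb ne unfolding cvx_def by blast
  then have "lessb b (snd (snd ((1 - t) *\<^sub>R x1 + t *\<^sub>R x2))) (Sbar D u ((1 - t) *\<^sub>R Phi x1 + t *\<^sub>R Phi x2))"
    using Eb_lessb[OF S(1,2,3,4)] S(5,6) by simp
  moreover have "snd (snd x1) = Sbar D u (Phi x1)" "snd (snd x2) = Sbar D u (Phi x2)"
    using Phi_in(2) x by auto
  ultimately show "lessb b (- Sbar D u ((1 - t) *\<^sub>R q1 + t *\<^sub>R q2)) ((1 - t) * - Sbar D u q1 + t * - Sbar D u q2)"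
    unfolding qx by (auto simp: lessb_def algebra_simps split: if_splits)
qed

lemma B_bwd:
  assumes cO: "convex (Omega D u)" and cs: "cvx b (Omega D u) (\<lambda>q. - Sbar D u q)"
  shows "cvx b Omp (Eb u)"
  unfolding cvx_def
proof (intro conjI convex_Omp ballI allI impI)
  fix x1 x2 and t :: real assume x: "x1 \<in> Omp" "x2 \<in> Omp" and tb: "0 < t \<and> t < 1 \<and> (b \<longrightarrow> x1 \<noteq> x2)"
  have t1: "0 \<le> t" "t \<le> 1" using tb by auto
  have q: "Phi x1 \<in> Omega D u" "Phi x2 \<in> Omega D u" using Phi_in x by auto
  have qin: "(1 - t) *\<^sub>R Phi x1 + t *\<^sub>R Phi x2 \<in> Omega D u"
    using cO q t1 unfolding convex_alt by blast
  note S = B_prep[OF x t1 qin]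
  have ne: "b \<longrightarrow> Phi x1 \<noteq> Phi x2" using tb Phi_in(3) x by metis
  have "lessb b (- Sbar D u ((1 - t) *\<^sub>R Phi x1 + t *\<^sub>R Phi x2)) ((1 - t) * - Sbar D u (Phi x1) + t * - Sbar D u (Phi x2))"
    using cs q tb ne unfolding cvx_def by blast
  moreover have "Sbar D u (Phi x1) = snd (snd x1)" "Sbar D u (Phi x2) = snd (snd x2)"
    using Phi_in(2) x by auto
  ultimately have "lessb b (snd (snd ((1 - t) *\<^sub>R x1 + t *\<^sub>R x2))) (snd (snd (Psi ((1 - t) *\<^sub>R Phi x1 + t *\<^sub>R Phi x2))))"
    unfolding S(6) by (auto simp: lessb_def algebra_simps split: if_splits)
  then show "lessb b (Eb u ((1 - t) *\<^sub>R x1 + t *\<^sub>R x2)) ((1 - t) * Eb u x1 + t * Eb u x2)"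
    using Eb_lessb[OF S(1,2,3,4)] S(5) by simp
qed

lemma part2:
  assumes "convex (Ds D u)"
  shows "(strict_convex_on D u \<longleftrightarrow> strict_concave_on (Omega D u) (Sbar D u))
        \<and> (convex_on D u \<longleftrightarrow> concave_on (Omega D u) (Sbar D u))"
proof -
  have cO: "convex (Omega D u)" by (rule convex_Omega[OF assms])
  have eq: "cvx b D u \<longleftrightarrow> cvx b (Omega D u) (\<lambda>q. - Sbar D u q)" for b
    using A_fwd A_bwd B_fwd[OF cO] B_bwd[OF cO] by blast
  show ?thesis
    using eq[of True] eq[of False]
    by (simp add: cvx_True cvx_False strict_concave_on_def concave_on_def)
qed

end

theorem mainTheorem9:
  fixes D :: "(real \<times> real) set" and u :: "real \<times> real \<Rightarrow> real"
  assumes "open D" and "convex D" and "D \<noteq> {}"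
    and "D \<subseteq> {p. fst p > 0}"
    and "C2_on D u"
    and "\<forall>p\<in>D. blinfun_apply (frechet_D u p) (0, 1) > 0"
  shows "((\<forall>p\<in>D. hess_pos_def u p) \<longleftrightarrow> (\<forall>q\<in>Omega D u. hess_neg_def (Sbar D u) q))
     \<and> (convex (Ds D u) \<longrightarrow>
          (strict_convex_on D u \<longleftrightarrow> strict_concave_on (Omega D u) (Sbar D u))
        \<and> (convex_on D u \<longleftrightarrow> concave_on (Omega D u) (Sbar D u)))"
proof -
  interpret thermo D u using assms by unfold_locales auto
  show ?thesis using part1 part2 by blast
qed

end
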